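(* Let $\bar x \in \mathrm{dom}\,\psi$, let $H > 0$, let $F'(\bar x) \in \partial F(\bar x)$ be a chosen subgradient with $F'(\bar x) \neq 0$, and let $A = A_H(\bar x) = \frac{1}{\sigma}\sqrt{\frac{H}{3}\|F'(\bar x)\|_*}$. Then $$H\, \|T_A(\bar x) - \bar x\| \;\leq\; 3\sigma A.$$
   Context: $\mathbb{E}$ is a finite-dimensional real vector space with an arbitrary norm $\|\cdot\|$; $\mathbb{E}^*$ is its dual with dual norm $\|g\|_* = \max\{\langle g, x\rangle : \|x\|\le 1\}$. $F = f + \psi$, where $\psi$ is a closed convex function with $\mathrm{dom}\,\psi \subseteq \mathbb{E}$ and $f$ is convex and twice continuously differentiable; subgradients of $F$ have the form $F'(\bar x) = \nabla f(\bar x) + \psi'(\bar x)$ with $\psi'(\bar x) \in \partial \psi(\bar x)$. The scaling function $d$ is differentiable and satisfies, for some $\sigma\in(0,1]$ and all $x,y \in \mathrm{dom}\,\psi$: $d(y) \ge d(x) + \langle \nabla d(x), y-x\rangle + \frac{\sigma}{2}\|y-x\|^2$ and $\|\nabla d(x) - \nabla d(y)\|_* \le \|x-y\|$. Bregman distance: $\rho(x,y) = d(y) - d(x) - \langle \nabla d(x), y-x\rangle$. For $A>0$, $$T_A(\bar x) = \arg\min_{y\in\mathrm{dom}\,\psi}\Big[ f(\bar x) + \langle \nabla f(\bar x), y-\bar x\rangle + \tfrac12 \langle \nabla^2 f(\bar x)(y-\bar x), y-\bar x\rangle + A\rho(\bar x,y) + \psi(y)\Big].$$ *)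

theory Defs
  imports "HOL-Analysis.Analysis"
begin

text \<open>The space E is modelled by a Euclidean space type 'a; the arbitrary norm of E is a
  separate function nrm.  The dual space E* is identified with 'a via the inner product,
  so the pairing of g with x is the inner product of g and x.\<close>

definition is_norm :: "('a::real_vector \<Rightarrow> real) \<Rightarrow> bool" where
  "is_norm nrm \<longleftrightarrow>
     (\<forall>x. nrm x = 0 \<longleftrightarrow> x = 0) \<and>
     (\<forall>x y. nrm (x + y) \<le> nrm x + nrm y) \<and>
     (\<forall>c x. nrm (c *\<^sub>R x) = \<bar>c\<bar> * nrm x)"

definition dual_norm :: "('a::real_inner \<Rightarrow> real) \<Rightarrow> 'a \<Rightarrow> real" where
  "dual_norm nrm g = Sup {g \<bullet> x | x. nrm x \<le> 1}"

text \<open>Closed convex function psi with effective domain D (psi is +infinity outside D):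
  D convex, psi convex on D, epigraph closed.\<close>
definition closed_convex_fun :: "'a::real_normed_vector set \<Rightarrow> ('a \<Rightarrow> real) \<Rightarrow> bool" where
  "closed_convex_fun D psi \<longleftrightarrow> convex D \<and> convex_on D psi \<and>
     closed {(x, t). x \<in> D \<and> psi x \<le> t}"

definition bregman :: "('a::real_inner \<Rightarrow> real) \<Rightarrow> ('a \<Rightarrow> 'a) \<Rightarrow> 'a \<Rightarrow> 'a \<Rightarrow> real" where
  "bregman d Dd x y = d y - d x - Dd x \<bullet> (y - x)"

definition model ::
  "('a::real_inner \<Rightarrow> real) \<Rightarrow> ('a \<Rightarrow> 'a) \<Rightarrow> ('a \<Rightarrow> 'a \<Rightarrow>\<^sub>L 'a) \<Rightarrow> ('a \<Rightarrow> real)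
    \<Rightarrow> ('a \<Rightarrow> 'a) \<Rightarrow> ('a \<Rightarrow> real) \<Rightarrow> real \<Rightarrow> 'a \<Rightarrow> 'a \<Rightarrow> real" where
  "model f Df D2f d Dd psi A xbar y =
     f xbar + Df xbar \<bullet> (y - xbar) + (1/2) * ((D2f xbar) (y - xbar) \<bullet> (y - xbar))
     + A * bregman d Dd xbar y + psi y"

definition is_T :: "'a::real_inner set \<Rightarrow> ('a \<Rightarrow> real) \<Rightarrow> ('a \<Rightarrow> 'a) \<Rightarrow> ('a \<Rightarrow> 'a \<Rightarrow>\<^sub>L 'a)
    \<Rightarrow> ('a \<Rightarrow> real) \<Rightarrow> ('a \<Rightarrow> 'a) \<Rightarrow> ('a \<Rightarrow> real) \<Rightarrow> real \<Rightarrow> 'a \<Rightarrow> 'a \<Rightarrow> bool" where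
  "is_T D f Df D2f d Dd psi A xbar T \<longleftrightarrow> T \<in> D \<and>
     (\<forall>y\<in>D. model f Df D2f d Dd psi A xbar T \<le> model f Df D2f d Dd psi A xbar y)"

end

theory Submission imports Defs begin

lemma nrm_basic:
  assumes "is_norm nrm"
  shows "nrm 0 = 0" "nrm (x + y) \<le> nrm x + nrm y" "nrm (c *\<^sub>R x) = \<bar>c\<bar> * nrm x"
    "nrm (- x) = nrm x" "nrm x \<ge> 0" "nrm x = 0 \<longleftrightarrow> x = 0"
proof -
  show 1: "nrm 0 = 0" using assms unfolding is_norm_def by auto
  show "nrm (x + y) \<le> nrm x + nrm y" "nrm (c *\<^sub>R x) = \<bar>c\<bar> * nrm x" "nrm x = 0 \<longleftrightarrow> x = 0"
    using assms unfolding is_norm_def by auto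
  show 2: "nrm (- x) = nrm x" using assms unfolding is_norm_def
    by (metis abs_minus_cancel abs_one mult_1 scaleR_minus1_left)
  have "nrm (x + - x) \<le> nrm x + nrm (-x)" using assms unfolding is_norm_def by blast
  then show "nrm x \<ge> 0" using 1 2 by simp
qed

lemma nrm_sum:
  assumes "is_norm nrm" "finite S"
  shows "nrm (sum g S) \<le> (\<Sum>i\<in>S. nrm (g i))"
  using assms(2)
proof (induction S rule: finite_induct)
  case empty then show ?case using nrm_basic(1)[OF assms(1)] by simp
next
  case (insert a S)
  then show ?case using nrm_basic(2)[OF assms(1), of "g a" "sum g S"] by simp
qed

lemma nrm_upper:
  fixes nrm :: "'a::euclidean_space \<Rightarrow> real"
  assumes "is_norm nrm"
  shows "\<exists>M\<ge>0. \<forall>x. nrm x \<le> M * norm x"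
proof -
  define M where "M = (\<Sum>b\<in>Basis. nrm (b::'a))"
  have M0: "M \<ge> 0" unfolding M_def by (intro sum_nonneg nrm_basic(5)[OF assms])
  have "nrm x \<le> M * norm x" for x
  proof -
    have "nrm x = nrm (\<Sum>b\<in>Basis. (x \<bullet> b) *\<^sub>R b)" by (simp add: euclidean_representation)
    also have "\<dots> \<le> (\<Sum>b\<in>Basis. nrm ((x \<bullet> b) *\<^sub>R b))" by (rule nrm_sum[OF assms]) simp
    also have "\<dots> = (\<Sum>b\<in>Basis. \<bar>x \<bullet> b\<bar> * nrm b)" using nrm_basic(3)[OF assms] by simp
    also have "\<dots> \<le> (\<Sum>b\<in>Basis. norm x * nrm b)"
      by (intro sum_mono mult_right_mono Basis_le_norm nrm_basic(5)[OF assms])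
    also have "\<dots> = M * norm x" unfolding M_def by (simp add: sum_distrib_left mult.commute)
    finally show ?thesis .
  qed
  then show ?thesis using M0 by blast
qed

lemma nrm_lower:
  fixes nrm :: "'a::euclidean_space \<Rightarrow> real"
  assumes "is_norm nrm"
  shows "\<exists>m>0. \<forall>x. m * norm x \<le> nrm x"
proof -
  obtain M where M: "M \<ge> 0" "\<And>x. nrm x \<le> M * norm x" using nrm_upper[OF assms] by blast
  have cont: "continuous_on UNIV nrm"
  proof (rule continuous_on_iff[THEN iffD2], intro ballI allI impI)
    fix x :: 'a and e :: real assume e: "e > 0"
    show "\<exists>d>0. \<forall>x'\<in>UNIV. dist x' x < d \<longrightarrow> dist (nrm x') (nrm x) < e"
    proof (intro exI[of _ "e / (M + 1)"] conjI ballI impI)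
      show "e / (M + 1) > 0" using e M by simp
      fix y assume "dist y x < e / (M + 1)"
      then have d: "norm (y - x) * (M + 1) < e" using M by (simp add: dist_norm field_simps)
      have a: "nrm y \<le> nrm x + nrm (y - x)" using nrm_basic(2)[OF assms, of x "y - x"] by simp
      have b: "nrm x \<le> nrm y + nrm (x - y)" using nrm_basic(2)[OF assms, of y "x - y"] by simp
      have c: "nrm (x - y) = nrm (y - x)" using nrm_basic(4)[OF assms, of "y - x"] by simp
      have "nrm (y - x) \<le> M * norm (y - x)" by (rule M(2))
      also have "\<dots> \<le> norm (y - x) * (M + 1)" by (simp add: algebra_simps)
      finally have "nrm (y - x) < e" using d by linarith
      then show "dist (nrm y) (nrm x) < e" using a b c by (simp add: dist_real_def abs_less_iff)
    qed
  qed
  have ne: "sphere (0::'a) 1 \<noteq> {}" by simp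
  obtain z where z: "z \<in> sphere (0::'a) 1" "\<And>y. y \<in> sphere 0 1 \<Longrightarrow> nrm z \<le> nrm y"
    using continuous_attains_inf[OF compact_sphere ne continuous_on_subset[OF cont]] by blast
  have z0: "z \<noteq> 0" using z(1) by auto
  have mpos: "nrm z > 0" using nrm_basic(5,6)[OF assms, of z] z0 by linarith
  have "nrm z * norm x \<le> nrm x" for x
  proof (cases "x = 0")
    case True then show ?thesis using nrm_basic(1)[OF assms] by simp
  next
    case False
    have "(1 / norm x) *\<^sub>R x \<in> sphere 0 1" using False by simp
    then have "nrm z \<le> nrm ((1 / norm x) *\<^sub>R x)" by (rule z(2))
    also have "\<dots> = nrm x / norm x" using nrm_basic(3)[OF assms] by simp
    finally show ?thesis using False by (simp add: field_simps)
  qed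
  then show ?thesis using mpos by blast
qed

lemma dual_bound:
  fixes nrm :: "'a::euclidean_space \<Rightarrow> real"
  assumes "is_norm nrm"
  shows "g \<bullet> x \<le> dual_norm nrm g * nrm x"
proof -
  obtain m where m: "m > 0" "\<And>x. m * norm x \<le> nrm x" using nrm_lower[OF assms] by blast
  have bdd: "bdd_above {g \<bullet> x | x. nrm x \<le> 1}"
  proof (rule bdd_aboveI[of _ "norm g / m"], clarify)
    fix x :: 'a assume "nrm x \<le> 1"
    then have "norm x \<le> 1 / m" using m(2)[of x] m(1) by (simp add: field_simps)
    then have "norm g * norm x \<le> norm g * (1 / m)" by (intro mult_left_mono) auto
    then show "g \<bullet> x \<le> norm g / m" using Cauchy_Schwarz_ineq2[of g x] by simp
  qed
  show ?thesis
  proof (cases "x = 0")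
    case True then show ?thesis using nrm_basic(1)[OF assms] by simp
  next
    case False
    then have np: "nrm x > 0" using nrm_basic(5,6)[OF assms, of x] by linarith
    have "nrm ((1 / nrm x) *\<^sub>R x) = 1" using nrm_basic(3)[OF assms, of "1 / nrm x" x] np by simp
    then have "g \<bullet> ((1 / nrm x) *\<^sub>R x) \<le> dual_norm nrm g"
      unfolding dual_norm_def by (intro cSup_upper bdd) (metis (mono_tags, lifting) mem_Collect_eq order_refl)
    then show ?thesis using np by (simp add: field_simps)
  qed
qed

lemma dual_pos:
  fixes nrm :: "'a::euclidean_space \<Rightarrow> real"
  assumes "is_norm nrm" "g \<noteq> 0"
  shows "dual_norm nrm g > 0"
proof -
  have "g \<bullet> g \<le> dual_norm nrm g * nrm g" by (rule dual_bound[OF assms(1)])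
  moreover have "g \<bullet> g > 0" using assms(2) by simp
  moreover have "nrm g \<ge> 0" by (rule nrm_basic(5)[OF assms(1)])
  ultimately show ?thesis by (metis mult_nonpos_nonneg not_le order_less_le_trans)
qed

lemma deriv_le:
  fixes g :: "real \<Rightarrow> real"
  assumes "(g has_real_derivative g') (at 0)"
    and "\<And>t. 0 < t \<Longrightarrow> t \<le> 1 \<Longrightarrow> g t - g 0 \<le> t * c"
  shows "g' \<le> c"
proof -
  have "((\<lambda>y. (g y - g 0) / (y - 0)) \<longlongrightarrow> g') (at 0)"
    using assms(1) has_field_derivative_iff by blast
  then have lim: "((\<lambda>y. (g y - g 0) / (y - 0)) \<longlongrightarrow> g') (at_right 0)"
    by (rule tendsto_mono[OF at_le, rotated]) simp
  have "eventually (\<lambda>t. (g t - g 0) / (t - 0) \<le> c) (at_right (0::real))"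
    unfolding eventually_at_right_field
  proof (intro exI[of _ 1] conjI allI impI)
    fix t :: real assume "0 < t" "t < 1"
    then show "(g t - g 0) / (t - 0) \<le> c" using assms(2)[of t] by (simp add: divide_le_eq mult.commute)
  qed simp
  then show ?thesis using tendsto_upperbound[OF lim] by simp
qed

lemma tangent_ineq:
  fixes f :: "'a::real_inner \<Rightarrow> real"
  assumes f_grad: "\<And>x. (f has_derivative (\<lambda>h. Df x \<bullet> h)) (at x)"
    and cvx: "convex_on UNIV f"
  shows "f y \<ge> f x + Df x \<bullet> (y - x)"
proof -
  define v where "v = y - x"
  define g where "g t = f (x + t *\<^sub>R v)" for t
  have "((\<lambda>t. x + t *\<^sub>R v) has_derivative (\<lambda>t. t *\<^sub>R v)) (at 0)"
    by (auto intro!: derivative_eq_intros)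
  from has_derivative_compose[OF this f_grad]
  have "(g has_derivative (\<lambda>t. Df x \<bullet> (t *\<^sub>R v))) (at 0)" unfolding g_def by simp
  then have d: "(g has_real_derivative (Df x \<bullet> v)) (at 0)"
    unfolding has_field_derivative_def by (rule has_derivative_eq_rhs) (auto simp: fun_eq_iff)
  have "Df x \<bullet> v \<le> f y - f x"
  proof (rule deriv_le[OF d])
    fix t :: real assume t: "0 < t" "t \<le> 1"
    have "f ((1 - t) *\<^sub>R x + t *\<^sub>R y) \<le> (1 - t) * f x + t * f y"
      using cvx t by (intro convex_onD) auto
    moreover have "(1 - t) *\<^sub>R x + t *\<^sub>R y = x + t *\<^sub>R v" unfolding v_def by (simp add: algebra_simps)
    ultimately show "g t - g 0 \<le> t * (f y - f x)" unfolding g_def by (simp add: algebra_simps)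
  qed
  then show ?thesis unfolding v_def by simp
qed

lemma hess_psd:
  fixes f :: "'a::real_inner \<Rightarrow> real"
  assumes f_grad: "\<And>x. (f has_derivative (\<lambda>h. Df x \<bullet> h)) (at x)"
    and f_hess: "\<And>x. (Df has_derivative blinfun_apply (D2f x)) (at x)"
    and cvx: "convex_on UNIV f"
  shows "D2f x h \<bullet> h \<ge> 0"
proof -
  define g where "g t = - (Df (x + t *\<^sub>R h) \<bullet> h)" for t
  have "((\<lambda>t. x + t *\<^sub>R h) has_derivative (\<lambda>t. t *\<^sub>R h)) (at 0)"
    by (auto intro!: derivative_eq_intros)
  from has_derivative_compose[OF this f_hess]
  have "((\<lambda>t. Df (x + t *\<^sub>R h)) has_derivative (\<lambda>t. D2f x (t *\<^sub>R h))) (at 0)" by simp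
  then have "(g has_derivative (\<lambda>t. - (D2f x (t *\<^sub>R h) \<bullet> h))) (at 0)"
    unfolding g_def by (auto intro!: derivative_eq_intros)
  then have d: "(g has_real_derivative (- (D2f x h \<bullet> h))) (at 0)"
    unfolding has_field_derivative_def by (rule has_derivative_eq_rhs) (auto simp: fun_eq_iff blinfun.scaleR_right)
  have "- (D2f x h \<bullet> h) \<le> 0"
  proof (rule deriv_le[OF d])
    fix t :: real assume t: "0 < t" "t \<le> 1"
    have a: "f (x + t *\<^sub>R h) \<ge> f x + Df x \<bullet> (t *\<^sub>R h)"
      using tangent_ineq[OF f_grad cvx, where y="x + t *\<^sub>R h" and x=x] by simp
    have b: "f x \<ge> f (x + t *\<^sub>R h) + Df (x + t *\<^sub>R h) \<bullet> (- (t *\<^sub>R h))"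
      using tangent_ineq[OF f_grad cvx, where y=x and x="x + t *\<^sub>R h"] by simp
    from a b have "t * (Df x \<bullet> h) \<le> t * (Df (x + t *\<^sub>R h) \<bullet> h)" by (simp add: algebra_simps)
    then have "Df x \<bullet> h \<le> Df (x + t *\<^sub>R h) \<bullet> h" using t by simp
    then show "g t - g 0 \<le> t * 0" unfolding g_def by simp
  qed
  then show ?thesis by simp
qed

theorem corollary1:
  fixes nrm :: "'a::euclidean_space \<Rightarrow> real"
    and f d :: "'a \<Rightarrow> real" and Df Dd :: "'a \<Rightarrow> 'a" and D2f :: "'a \<Rightarrow> ('a \<Rightarrow>\<^sub>L 'a)"
    and psi :: "'a \<Rightarrow> real" and D :: "'a set"
    and \<sigma> H A :: real and xbar s T :: 'a
  assumes norm: "is_norm nrm"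
    and f_grad: "\<And>x. (f has_derivative (\<lambda>h. Df x \<bullet> h)) (at x)"
    and f_hess: "\<And>x. (Df has_derivative blinfun_apply (D2f x)) (at x)"
    and f_hess_cont: "continuous_on UNIV D2f"
    and f_convex: "convex_on UNIV f"
    and psi_closed_convex: "closed_convex_fun D psi"
    and d_grad: "\<And>x. x \<in> D \<Longrightarrow> (d has_derivative (\<lambda>h. Dd x \<bullet> h)) (at x)"
    and sigma: "0 < \<sigma>" "\<sigma> \<le> 1"
    and d_strong: "\<And>x y. x \<in> D \<Longrightarrow> y \<in> D \<Longrightarrow>
                     d y \<ge> d x + Dd x \<bullet> (y - x) + \<sigma> / 2 * (nrm (y - x))\<^sup>2"
    and d_lip: "\<And>x y. x \<in> D \<Longrightarrow> y \<in> D \<Longrightarrow> dual_norm nrm (Dd x - Dd y) \<le> nrm (x - y)"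
    and xbar: "xbar \<in> D"
    and H: "H > 0"
    and s_subgrad: "\<And>y. y \<in> D \<Longrightarrow> psi y \<ge> psi xbar + s \<bullet> (y - xbar)"
    and Fp_nz: "Df xbar + s \<noteq> 0"
    and A_def: "A = (1 / \<sigma>) * sqrt (H / 3 * dual_norm nrm (Df xbar + s))"
    and T: "is_T D f Df D2f d Dd psi A xbar T"
  shows "H * nrm (T - xbar) \<le> 3 * \<sigma> * A"
proof -
  note nb = nrm_basic[OF norm]
  define h where "h = T - xbar"
  define r where "r = nrm h"
  define g where "g = Df xbar + s"
  define G where "G = dual_norm nrm g"
  define Q where "Q = D2f xbar"
  have TD: "T \<in> D" using T unfolding is_T_def by simp
  have Gpos: "G > 0" unfolding G_def g_def by (rule dual_pos[OF norm Fp_nz])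
  have Apos: "A > 0" using A_def sigma H Gpos unfolding G_def g_def by simp
  have A0: "A \<ge> 0" using Apos by simp
  have sA: "\<sigma> * A = sqrt (H / 3 * G)" using A_def sigma unfolding G_def g_def by simp
  have A2: "(\<sigma> * A)^2 = H / 3 * G" unfolding sA using H Gpos by simp
  have r0: "r \<ge> 0" unfolding r_def by (rule nb(5))
  have Qpos: "Q h \<bullet> h \<ge> 0" unfolding Q_def by (rule hess_psd[OF f_grad f_hess f_convex])
  have cvxD: "convex D" and cvpsi: "convex_on D psi"
    using psi_closed_convex unfolding closed_convex_fun_def by auto
  have mono: "Dd T \<bullet> h - Dd xbar \<bullet> h \<ge> \<sigma> * r^2"
  proof -
    have 1: "d T \<ge> d xbar + Dd xbar \<bullet> h + \<sigma> / 2 * r^2"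
      using d_strong[OF xbar TD] unfolding h_def r_def by simp
    have 2: "d xbar \<ge> d T + Dd T \<bullet> (- h) + \<sigma> / 2 * r^2"
    proof -
      have hx: "xbar - T = - h" unfolding h_def by simp
      show ?thesis using d_strong[OF TD xbar] unfolding hx nb(4) r_def .
    qed
    from 1 2 show ?thesis by (simp add: inner_minus_right) 
  qed
  have key: "A * \<sigma> * r^2 \<le> - (g \<bullet> h) + A * t * r^2" if t: "0 < t" "t \<le> 1" for t
  proof -
    define y where "y = T - t *\<^sub>R h"
    have yeq: "y = (1 - t) *\<^sub>R T + t *\<^sub>R xbar" unfolding y_def h_def by (simp add: algebra_simps)
    have yD: "y \<in> D" unfolding yeq using cvxD TD xbar t by (intro convexD) auto
    have ymx: "y - xbar = (1 - t) *\<^sub>R h" unfolding y_def h_def by (simp add: algebra_simps)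
    have Tmy: "T - y = t *\<^sub>R h" unfolding y_def by simp
    have opt: "model f Df D2f d Dd psi A xbar T \<le> model f Df D2f d Dd psi A xbar y"
      using T yD unfolding is_T_def by blast
    have Tmx: "T - xbar = h" unfolding h_def by simp
    define a where "a = Df xbar \<bullet> h"
    define q where "q = Q h \<bullet> h"
    define b where "b = Dd xbar \<bullet> h"
    define c where "c = Dd T \<bullet> h"
    define sh where "sh = s \<bullet> h"
    have eT: "model f Df D2f d Dd psi A xbar T = f xbar + a + 1/2 * q + A * (d T - d xbar - b) + psi T"
      unfolding model_def bregman_def Tmx a_def q_def b_def Q_def by simp
    have ey: "model f Df D2f d Dd psi A xbar y = f xbar + (1-t) * a + 1/2 * ((1-t) * ((1-t) * q)) + A * (d y - d xbar - (1-t) * b) + psi y"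
      unfolding model_def bregman_def ymx a_def q_def b_def Q_def by (simp add: blinfun.scaleR_right)
    have opt2: "a + 1/2 * q + A * (d T - d xbar - b) + psi T \<le> (1-t) * a + 1/2 * ((1-t) * ((1-t) * q)) + A * (d y - d xbar - (1-t) * b) + psi y"
      using opt unfolding eT ey by simp
    have opt3: "0 \<le> - t * a + (t * t - 2 * t) * q / 2 + A * (d y - d T) + A * (t * b) + (psi y - psi T)"
    proof -
      have "A * (d y - d xbar - (1-t) * b) - A * (d T - d xbar - b) = A * (d y - d T) + A * (t * b)"
        by (simp add: algebra_simps)
      moreover have "1/2 * ((1-t) * ((1-t) * q)) - 1/2 * q = (t * t - 2 * t) * q / 2"
        by (simp add: algebra_simps)
      moreover have "(1-t) * a = a - t * a" by (simp add: left_diff_distrib)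
      moreover have "- t * a = - (t * a)" by simp
      ultimately show ?thesis using opt2 by linarith
    qed
    have psiy: "psi y \<le> (1 - t) * psi T + t * psi xbar"
      unfolding yeq using cvpsi TD xbar t by (intro convex_onD) auto
    have psis: "psi T \<ge> psi xbar + s \<bullet> h" using s_subgrad[OF TD] unfolding h_def .
    have dy: "d T \<ge> d y + Dd y \<bullet> (T - y) + \<sigma> / 2 * (nrm (T - y))^2" by (rule d_strong[OF yD TD])
    have lip: "(Dd T - Dd y) \<bullet> h \<le> dual_norm nrm (Dd T - Dd y) * r"
      unfolding r_def by (rule dual_bound[OF norm])
    have lip2: "dual_norm nrm (Dd T - Dd y) \<le> t * r"
      using d_lip[OF TD yD] unfolding Tmy r_def using nb(3)[of t h] t by simp
    have "dual_norm nrm (Dd T - Dd y) * r \<le> t * r * r" using lip2 r0 by (rule mult_right_mono)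
    with lip have lip3: "Dd T \<bullet> h - Dd y \<bullet> h \<le> t * r^2" by (simp add: inner_diff_left power2_eq_square)
    have sq: "\<sigma> / 2 * (nrm (T - y))^2 \<ge> 0" using sigma by simp
    have dy2: "d y - d T \<le> - t * (Dd T \<bullet> h) + t * (t * r^2)"
    proof -
      have "d y - d T \<le> - (t * (Dd y \<bullet> h))" using dy sq unfolding Tmy by simp
      moreover have "t * (Dd T \<bullet> h - Dd y \<bullet> h) \<le> t * (t * r^2)" using lip3 t by simp
      ultimately show ?thesis by (simp add: algebra_simps)
    qed
    have Ad: "A * (d y - d T) \<le> A * (- t * (Dd T \<bullet> h) + t * (t * r^2))"
      using dy2 A0 by (rule mult_left_mono)
    have Am: "A * (t * (\<sigma> * r^2)) \<le> A * (t * (Dd T \<bullet> h - Dd xbar \<bullet> h))"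
      using mono A0 t by (intro mult_left_mono) auto
    have Qt: "(t^2 - 2 * t) * (Q h \<bullet> h) \<le> 0"
      using Qpos t by (intro mult_nonpos_nonneg) (auto simp: power2_eq_square)
    have psi2: "psi y - psi T \<le> - t * sh"
    proof -
      have "t * psi xbar \<le> t * (psi T - sh)" using psis t unfolding sh_def by simp
      moreover have "(1-t) * psi T = psi T - t * psi T" by (simp add: left_diff_distrib)
      moreover have "t * (psi T - sh) = t * psi T - t * sh" by (simp add: right_diff_distrib)
      ultimately show ?thesis using psiy by linarith
    qed
    have Ad2: "A * (d y - d T) \<le> - (A * (t * c)) + A * (t * (t * r^2))"
    proof -
      have "A * (- t * (Dd T \<bullet> h) + t * (t * r^2)) = - (A * (t * c)) + A * (t * (t * r^2))"
        unfolding c_def by (simp add: distrib_left right_diff_distrib)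
      then show ?thesis using Ad by linarith
    qed
    have Am2: "A * (t * (\<sigma> * r^2)) \<le> A * (t * c) - A * (t * b)"
    proof -
      have "A * (t * (Dd T \<bullet> h - Dd xbar \<bullet> h)) = A * (t * c) - A * (t * b)"
        unfolding c_def b_def by (simp add: right_diff_distrib)
      then show ?thesis using Am by linarith
    qed
    have Qt2: "(t * t - 2 * t) * q / 2 \<le> 0" using Qt unfolding q_def by (simp add: power2_eq_square)
    have gh: "g \<bullet> h = a + sh" unfolding g_def a_def sh_def by (simp add: inner_add_left)
    have "0 \<le> - t * (a + sh) - A * (t * (\<sigma> * r^2)) + A * (t * (t * r^2))"
    proof -
      have "- t * (a + sh) = - t * a - t * sh" by (simp add: distrib_left)
      then show ?thesis using opt3 psi2 Ad2 Am2 Qt2 by linarith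
    qed
    then have "0 \<le> - t * (g \<bullet> h) - A * (t * (\<sigma> * r^2)) + A * (t * (t * r^2))" unfolding gh .
    then have "t * (A * \<sigma> * r^2) \<le> t * (- (g \<bullet> h) + A * t * r^2)" by (simp add: algebra_simps)
    then show ?thesis using t by simp
  qed
  have main: "A * \<sigma> * r^2 \<le> - (g \<bullet> h)"
  proof (rule ccontr)
    assume "\<not> ?thesis"
    then have gap: "A * \<sigma> * r^2 - - (g \<bullet> h) > 0" by simp
    define t where "t = min 1 ((A * \<sigma> * r^2 - - (g \<bullet> h)) / (2 * (A * r^2 + 1)))"
    have c0: "A * r^2 \<ge> 0" using A0 by simp
    have tp: "t > 0" unfolding t_def using gap c0 by simp
    have t1: "t \<le> 1" unfolding t_def by simp
    have "t * (A * r^2) \<le> t * (A * r^2 + 1)" using tp by simp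
    also have "\<dots> \<le> (A * \<sigma> * r^2 - - (g \<bullet> h)) / (2 * (A * r^2 + 1)) * (A * r^2 + 1)"
      using c0 unfolding t_def by (intro mult_right_mono) auto
    also have "\<dots> = (A * \<sigma> * r^2 - - (g \<bullet> h)) / 2" using c0 by (simp add: field_simps)
    finally have "A * t * r^2 \<le> (A * \<sigma> * r^2 - - (g \<bullet> h)) / 2" by (simp add: algebra_simps)
    moreover note key[OF tp t1] gap
    ultimately show False by argo
  qed
  have "- (g \<bullet> h) = g \<bullet> (- h)" by simp
  also have "\<dots> \<le> G * nrm (- h)" unfolding G_def by (rule dual_bound[OF norm])
  also have "\<dots> = G * r" unfolding r_def using nb(4) by simp
  finally have "A * \<sigma> * r^2 \<le> G * r" using main by linarith
  show ?thesis
  proof (cases "r = 0")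
    case True then show ?thesis using A0 sigma unfolding r_def h_def by simp
  next
    case False
    then have rp: "r > 0" using r0 by simp
    have "A * \<sigma> * r * r \<le> G * r" using \<open>A * \<sigma> * r^2 \<le> G * r\<close> by (simp add: power2_eq_square)
    then have ar: "A * \<sigma> * r \<le> G" using rp by simp
    have "H * (A * \<sigma> * r) \<le> H * G" using ar H by simp
    also have "\<dots> = 3 * (\<sigma> * A)^2" using A2 by simp
    finally have "(\<sigma> * A) * (H * r) \<le> (\<sigma> * A) * (3 * \<sigma> * A)"
      by (simp add: power2_eq_square algebra_simps)
    then have "H * r \<le> 3 * \<sigma> * A" using sigma Apos by simp
    then show ?thesis unfolding r_def h_def .
  qed
qed

end
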